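(* Let $G$ be a finite nilpotent group whose order has at least four distinct prime divisors. Then the difference graph $\mathcal{D}(G)$ is not perfect.
   Context: For a finite group $G$ with identity $e$: the intersection power graph $\mathcal{G}_I(G)$ has vertex set $G$, two distinct non-identity vertices $x,y$ being adjacent iff $\langle x\rangle\cap\langle y\rangle\neq\{e\}$, and $e$ being adjacent to every other vertex. The power graph $\mathcal{P}(G)$ has vertex set $G$, two distinct vertices being adjacent iff one is a power of the other. The difference graph $\mathcal{D}(G)$ is the graph on vertex set $G$ with edge set $E(\mathcal{G}_I(G))\setminus E(\mathcal{P}(G))$, with all isolated vertices removed. *)

theory Defs
  imports "HOL-Algebra.Algebra" "HOL-Computational_Algebra.Primes"
begin

primrec lower_central :: "('a, 'b) monoid_scheme \<Rightarrow> nat \<Rightarrow> 'a set" where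
  "lower_central G 0 = carrier G"
| "lower_central G (Suc n) =
     generate G {h \<otimes>\<^bsub>G\<^esub> g \<otimes>\<^bsub>G\<^esub> inv\<^bsub>G\<^esub> h \<otimes>\<^bsub>G\<^esub> inv\<^bsub>G\<^esub> g
                 | h g. h \<in> lower_central G n \<and> g \<in> carrier G}"

definition nilpotent_group :: "('a, 'b) monoid_scheme \<Rightarrow> bool" where
  "nilpotent_group G \<longleftrightarrow> group G \<and> (\<exists>n. lower_central G n = {\<one>\<^bsub>G\<^esub>})"

definition is_clique :: "'v set \<Rightarrow> ('v \<Rightarrow> 'v \<Rightarrow> bool) \<Rightarrow> bool" where
  "is_clique K E \<longleftrightarrow> (\<forall>x\<in>K. \<forall>y\<in>K. x \<noteq> y \<longrightarrow> E x y)"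

definition clique_number :: "'v set \<Rightarrow> ('v \<Rightarrow> 'v \<Rightarrow> bool) \<Rightarrow> nat" where
  "clique_number V E = Max {card K | K. K \<subseteq> V \<and> is_clique K E}"

definition proper_colouring :: "'v set \<Rightarrow> ('v \<Rightarrow> 'v \<Rightarrow> bool) \<Rightarrow> ('v \<Rightarrow> nat) \<Rightarrow> nat \<Rightarrow> bool" where
  "proper_colouring V E c k \<longleftrightarrow>
     (\<forall>x\<in>V. c x < k) \<and> (\<forall>x\<in>V. \<forall>y\<in>V. x \<noteq> y \<longrightarrow> E x y \<longrightarrow> c x \<noteq> c y)"

definition chromatic_number :: "'v set \<Rightarrow> ('v \<Rightarrow> 'v \<Rightarrow> bool) \<Rightarrow> nat" where
  "chromatic_number V E = (LEAST k. \<exists>c. proper_colouring V E c k)"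

definition perfect_graph :: "'v set \<Rightarrow> ('v \<Rightarrow> 'v \<Rightarrow> bool) \<Rightarrow> bool" where
  "perfect_graph V E \<longleftrightarrow> (\<forall>S\<subseteq>V. chromatic_number S E = clique_number S E)"

definition power_graph_edge :: "('a, 'b) monoid_scheme \<Rightarrow> 'a \<Rightarrow> 'a \<Rightarrow> bool" where
  "power_graph_edge G x y \<longleftrightarrow> x \<in> carrier G \<and> y \<in> carrier G \<and> x \<noteq> y \<and>
     ((\<exists>k::int. y = x [^]\<^bsub>G\<^esub> k) \<or> (\<exists>k::int. x = y [^]\<^bsub>G\<^esub> k))"

definition int_power_graph_edge :: "('a, 'b) monoid_scheme \<Rightarrow> 'a \<Rightarrow> 'a \<Rightarrow> bool" where
  "int_power_graph_edge G x y \<longleftrightarrow> x \<in> carrier G \<and> y \<in> carrier G \<and> x \<noteq> y \<and>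
     (x = \<one>\<^bsub>G\<^esub> \<or> y = \<one>\<^bsub>G\<^esub> \<or>
      generate G {x} \<inter> generate G {y} \<noteq> {\<one>\<^bsub>G\<^esub>})"

definition diff_graph_edge :: "('a, 'b) monoid_scheme \<Rightarrow> 'a \<Rightarrow> 'a \<Rightarrow> bool" where
  "diff_graph_edge G x y \<longleftrightarrow> int_power_graph_edge G x y \<and> \<not> power_graph_edge G x y"

definition diff_graph_vertices :: "('a, 'b) monoid_scheme \<Rightarrow> 'a set" where
  "diff_graph_vertices G = {x \<in> carrier G. \<exists>y. diff_graph_edge G x y}"

end

theory Submission
  imports Defs
begin


lemma (in group) one_of_coprime_pows:
  assumes "x \<in> carrier G" "x [^] (m::nat) = \<one>" "x [^] (n::nat) = \<one>" "coprime m n"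
  shows "x = \<one>"
proof -
  have "ord x dvd m" "ord x dvd n" using assms pow_eq_id by auto
  then have "ord x dvd gcd m n" by simp
  then have "ord x = 1" using assms(4) by simp
  then show ?thesis using ord_eq_1 assms(1) by blast
qed

lemma (in group) inv_cancel_left_assoc [simp]:
  "x \<in> carrier G \<Longrightarrow> z \<in> carrier G \<Longrightarrow> inv x \<otimes> (x \<otimes> z) = z"
  "x \<in> carrier G \<Longrightarrow> z \<in> carrier G \<Longrightarrow> x \<otimes> (inv x \<otimes> z) = z"
  by (simp_all add: m_assoc[symmetric])

lemma (in group) comm_lemma:
  assumes xx: "xx \<in> carrier G" and yy: "yy \<in> carrier G"
    and cdef: "cc = xx \<otimes> yy \<otimes> inv xx \<otimes> inv yy"
    and cx: "cc \<otimes> xx = xx \<otimes> cc" and cy: "cc \<otimes> yy = yy \<otimes> cc"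
    and xm: "xx [^] (m::nat) = \<one>" and yn: "yy [^] (n::nat) = \<one>" and cop: "coprime m n"
  shows "cc = \<one>"
proof -
  have cc: "cc \<in> carrier G" using cdef xx yy by simp
  have h1: "xx \<otimes> yy \<otimes> inv xx = cc \<otimes> yy"
    using xx yy cdef by (simp add: m_assoc)
  have h2: "xx \<otimes> yy [^] j \<otimes> inv xx = cc [^] j \<otimes> yy [^] j" for j :: nat
  proof (induction j)
    case 0 then show ?case using xx by simp
  next
    case (Suc j)
    have "xx \<otimes> yy [^] Suc j \<otimes> inv xx = (xx \<otimes> yy [^] j \<otimes> inv xx) \<otimes> (xx \<otimes> yy \<otimes> inv xx)"
      using xx yy by (simp add: m_assoc)
    also have "\<dots> = cc [^] j \<otimes> (yy [^] j \<otimes> cc) \<otimes> yy" using Suc h1 xx yy cc by (simp add: m_assoc)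
    also have "\<dots> = cc [^] j \<otimes> (cc \<otimes> yy [^] j) \<otimes> yy"
      using group_commutes_pow[OF cy[symmetric] yy cc, of j] by simp
    also have "\<dots> = cc [^] Suc j \<otimes> yy [^] Suc j" using xx yy cc by (simp add: m_assoc)
    finally show ?case .
  qed
  have h3: "xx [^] i \<otimes> yy \<otimes> inv (xx [^] i) = cc [^] i \<otimes> yy" for i :: nat
  proof (induction i)
    case 0 then show ?case using yy by simp
  next
    case (Suc i)
    have "xx [^] Suc i \<otimes> yy \<otimes> inv (xx [^] Suc i) = xx [^] i \<otimes> (xx \<otimes> yy \<otimes> inv xx) \<otimes> inv (xx [^] i)"
      using xx yy by (simp add: m_assoc inv_mult_group)
    also have "\<dots> = (xx [^] i \<otimes> cc) \<otimes> yy \<otimes> inv (xx [^] i)" using h1 xx yy cc by (simp add: m_assoc)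
    also have "\<dots> = cc \<otimes> (xx [^] i \<otimes> yy \<otimes> inv (xx [^] i))"
      using group_commutes_pow[OF cx[symmetric] xx cc, of i] xx yy cc by (simp add: m_assoc)
    also have "\<dots> = cc \<otimes> cc [^] i \<otimes> yy" using Suc cc yy by (simp add: m_assoc)
    also have "\<dots> = cc [^] Suc i \<otimes> yy" using cc by (metis nat_pow_Suc nat_pow_Suc2)
    finally show ?case .
  qed
  have "cc [^] n = \<one>"
  proof -
    have "cc [^] n \<otimes> yy [^] n = xx \<otimes> yy [^] n \<otimes> inv xx" using h2 by simp
    then show ?thesis using yn xx cc by simp
  qed
  moreover have "cc [^] m = \<one>"
  proof -
    have "cc [^] m \<otimes> yy = yy" using h3[of m] xm xx yy by simp
    then show ?thesis using cc yy by (metis l_one nat_pow_closed one_closed r_cancel_one)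
  qed
  ultimately show ?thesis using one_of_coprime_pows cc cop by blast
qed

lemma (in group) lc_props:
  "subgroup (lower_central G k) G \<and>
   (\<forall>t\<in>carrier G. \<forall>h\<in>lower_central G k. t \<otimes> h \<otimes> inv t \<in> lower_central G k)"
proof (induction k)
  case 0
  then show ?case by (simp add: subgroup_self)
next
  case (Suc k)
  let ?S = "{h \<otimes> g \<otimes> inv h \<otimes> inv g | h g. h \<in> lower_central G k \<and> g \<in> carrier G}"
  have sub: "subgroup (lower_central G k) G" using Suc by blast
  have Sc: "?S \<subseteq> carrier G" using subgroup.subset[OF sub] by blast
  have Sk: "?S \<subseteq> lower_central G k"
  proof
    fix z assume "z \<in> ?S"
    then obtain h g where z: "z = h \<otimes> g \<otimes> inv h \<otimes> inv g" and h: "h \<in> lower_central G k"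
      and g: "g \<in> carrier G" by blast
    have hc: "h \<in> carrier G" using h subgroup.subset[OF sub] by blast
    have "g \<otimes> inv h \<otimes> inv g \<in> lower_central G k"
    proof -
      have "inv h \<in> lower_central G k" by (rule subgroup.m_inv_closed[OF sub h])
      then show ?thesis using Suc g by blast
    qed
    then have "h \<otimes> (g \<otimes> inv h \<otimes> inv g) \<in> lower_central G k"
      by (rule subgroup.m_closed[OF sub h])
    then show "z \<in> lower_central G k" using z hc g by (simp add: m_assoc)
  qed
  have sub1: "subgroup (lower_central G (Suc k)) G"
    using generate_is_subgroup[OF Sc] by simp
  have incl: "lower_central G (Suc k) \<subseteq> lower_central G k"
    using generate_subgroup_incl[OF Sk sub] by simp
  have "t \<otimes> z \<otimes> inv t \<in> lower_central G (Suc k)"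
    if t: "t \<in> carrier G" and z: "z \<in> lower_central G (Suc k)" for t z
  proof -
    have zk: "z \<in> lower_central G k" using z incl by blast
    have zc: "z \<in> carrier G" using z subgroup.subset[OF sub1] by blast
    have "z \<otimes> t \<otimes> inv z \<otimes> inv t \<in> ?S" using zk t by blast
    then have a: "z \<otimes> t \<otimes> inv z \<otimes> inv t \<in> lower_central G (Suc k)"
      unfolding lower_central.simps(2) by (rule generate.incl)
    have "t \<otimes> z \<otimes> inv t = inv (z \<otimes> t \<otimes> inv z \<otimes> inv t) \<otimes> z"
      using zc t by (simp add: m_assoc inv_mult_group)
    moreover have "inv (z \<otimes> t \<otimes> inv z \<otimes> inv t) \<otimes> z \<in> lower_central G (Suc k)"
      by (rule subgroup.m_closed[OF sub1 subgroup.m_inv_closed[OF sub1 a] z])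
    ultimately show ?thesis by simp
  qed
  then show ?case using sub1 by blast
qed

lemma (in group) lc_normal: "lower_central G k \<lhd> G"
  using lc_props normal_inv_iff by blast

lemma (in group) comm_trivial_of_commutator:
  assumes "a \<in> carrier G" "b \<in> carrier G" "a \<otimes> b \<otimes> inv a \<otimes> inv b = \<one>"
  shows "a \<otimes> b = b \<otimes> a"
proof -
  have "a \<otimes> b \<otimes> inv (b \<otimes> a) = \<one>" using assms by (simp add: m_assoc inv_mult_group)
  then show ?thesis using assms by (metis inv_closed m_closed r_inv inv_equality inv_inv)
qed

lemma (in group) commutator_in_lc:
  assumes x: "x \<in> carrier G" and y: "y \<in> carrier G"
    and xm: "x [^] (m::nat) = \<one>" and yn: "y [^] (n::nat) = \<one>" and cop: "coprime m n"
  shows "x \<otimes> y \<otimes> inv x \<otimes> inv y \<in> lower_central G k"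
proof (induction k)
  case 0
  then show ?case using x y by simp
next
  case (Suc k)
  define N where "N = lower_central G (Suc k)"
  define c where "c = x \<otimes> y \<otimes> inv x \<otimes> inv y"
  have c: "c \<in> carrier G" using x y c_def by simp
  interpret N: normal N G unfolding N_def by (rule lc_normal)
  define Q where "Q = G Mod N"
  have gQ: "group Q" unfolding Q_def by (rule N.factorgroup_is_group)
  interpret h: group_hom G Q "(\<lambda>a. N #> a)"
    unfolding group_hom_def group_hom_axioms_def Q_def
    using N.r_coset_hom_Mod N.factorgroup_is_group is_group by blast
  have gen: "c \<otimes> g \<otimes> inv c \<otimes> inv g \<in> N" if g: "g \<in> carrier G" for g
  proof -
    have "c \<otimes> g \<otimes> inv c \<otimes> inv g \<in> {h \<otimes> g \<otimes> inv h \<otimes> inv g | h g. h \<in> lower_central G k \<and> g \<in> carrier G}"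
      using Suc g c_def by blast
    then show ?thesis unfolding N_def lower_central.simps(2) by (rule generate.incl)
  qed
  have cen: "(N #> c) \<otimes>\<^bsub>Q\<^esub> (N #> g) = (N #> g) \<otimes>\<^bsub>Q\<^esub> (N #> c)" if g: "g \<in> carrier G" for g
  proof -
    have "N #> (c \<otimes> g \<otimes> inv c \<otimes> inv g) = N" using gen[OF g] N.rcos_const is_group by blast
    then have "(N #> c) \<otimes>\<^bsub>Q\<^esub> (N #> g) \<otimes>\<^bsub>Q\<^esub> inv\<^bsub>Q\<^esub> (N #> c) \<otimes>\<^bsub>Q\<^esub> inv\<^bsub>Q\<^esub> (N #> g) = \<one>\<^bsub>Q\<^esub>"
    proof -
      have "N #> (c \<otimes> g \<otimes> inv c \<otimes> inv g) = (N #> c) \<otimes>\<^bsub>Q\<^esub> (N #> g) \<otimes>\<^bsub>Q\<^esub> inv\<^bsub>Q\<^esub> (N #> c) \<otimes>\<^bsub>Q\<^esub> inv\<^bsub>Q\<^esub> (N #> g)"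
        using c g by simp
      moreover have "\<one>\<^bsub>Q\<^esub> = N" unfolding Q_def by simp
      ultimately show ?thesis using \<open>N #> (c \<otimes> g \<otimes> inv c \<otimes> inv g) = N\<close> by simp
    qed
    then show ?thesis
      by (rule group.comm_trivial_of_commutator[OF gQ h.hom_closed[OF c] h.hom_closed[OF g]])
  qed
  have "N #> c = \<one>\<^bsub>Q\<^esub>"
  proof (rule group.comm_lemma[OF gQ])
    show "N #> x \<in> carrier Q" "N #> y \<in> carrier Q" using x y by simp_all
    show "N #> c = (N #> x) \<otimes>\<^bsub>Q\<^esub> (N #> y) \<otimes>\<^bsub>Q\<^esub> inv\<^bsub>Q\<^esub> (N #> x) \<otimes>\<^bsub>Q\<^esub> inv\<^bsub>Q\<^esub> (N #> y)"
      using x y c_def by simp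
    show "(N #> c) \<otimes>\<^bsub>Q\<^esub> (N #> x) = (N #> x) \<otimes>\<^bsub>Q\<^esub> (N #> c)" using cen x by blast
    show "(N #> c) \<otimes>\<^bsub>Q\<^esub> (N #> y) = (N #> y) \<otimes>\<^bsub>Q\<^esub> (N #> c)" using cen y by blast
    show "(N #> x) [^]\<^bsub>Q\<^esub> m = \<one>\<^bsub>Q\<^esub>" using x xm by (simp flip: h.hom_nat_pow)
    show "(N #> y) [^]\<^bsub>Q\<^esub> n = \<one>\<^bsub>Q\<^esub>" using y yn by (simp flip: h.hom_nat_pow)
    show "coprime m n" by (rule cop)
  qed
  moreover have "\<one>\<^bsub>Q\<^esub> = N" unfolding Q_def by simp
  ultimately have "N #> c = N" by simp
  then have "c \<in> N" using rcos_self[OF c N.subgroup_axioms] by simp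
  then show ?case unfolding c_def N_def .
qed

lemma nilpotent_commute:
  assumes nil: "nilpotent_group G" and x: "x \<in> carrier G" and y: "y \<in> carrier G"
    and xm: "x [^]\<^bsub>G\<^esub> (m::nat) = \<one>\<^bsub>G\<^esub>" and yn: "y [^]\<^bsub>G\<^esub> (n::nat) = \<one>\<^bsub>G\<^esub>" and cop: "coprime m n"
  shows "x \<otimes>\<^bsub>G\<^esub> y = y \<otimes>\<^bsub>G\<^esub> x"
proof -
  interpret group G using nil unfolding nilpotent_group_def by blast
  obtain k where k: "lower_central G k = {\<one>\<^bsub>G\<^esub>}" using nil unfolding nilpotent_group_def by blast
  have "x \<otimes>\<^bsub>G\<^esub> y \<otimes>\<^bsub>G\<^esub> inv\<^bsub>G\<^esub> x \<otimes>\<^bsub>G\<^esub> inv\<^bsub>G\<^esub> y \<in> lower_central G k"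
    by (rule commutator_in_lc[OF x y xm yn cop])
  then have "x \<otimes>\<^bsub>G\<^esub> y \<otimes>\<^bsub>G\<^esub> inv\<^bsub>G\<^esub> x \<otimes>\<^bsub>G\<^esub> inv\<^bsub>G\<^esub> y = \<one>\<^bsub>G\<^esub>" using k by blast
  then show ?thesis by (rule comm_trivial_of_commutator[OF x y])
qed



lemma sub2: "K \<subseteq> {x, y} \<Longrightarrow> card K \<le> 2"
proof -
  assume "K \<subseteq> {x, y}"
  then have "card K \<le> card {x, y}" by (rule card_mono[rotated]) simp
  moreover have "card {x, y} \<le> 2" by (cases "x = y") auto
  ultimately show ?thesis by linarith
qed

lemma odd_hole_not_perfect:
  assumes sym: "\<And>x y. E x y \<Longrightarrow> E y x"
    and e: "E v0 v1" "E v1 v2" "E v2 v3" "E v3 v4" "E v4 v0"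
    and n: "\<not> E v0 v2" "\<not> E v0 v3" "\<not> E v1 v3" "\<not> E v1 v4" "\<not> E v2 v4"
    and V: "{v0, v1, v2, v3, v4} \<subseteq> V"
  shows "\<not> perfect_graph V E"
proof
  assume perf: "perfect_graph V E"
  have n': "\<not> E v2 v0" "\<not> E v3 v0" "\<not> E v3 v1" "\<not> E v4 v1" "\<not> E v4 v2"
    using n sym by blast+
  define S where "S = {v0, v1, v2, v3, v4}"
  have d: "v0 \<noteq> v1" "v0 \<noteq> v2" "v0 \<noteq> v3" "v0 \<noteq> v4" "v1 \<noteq> v2" "v1 \<noteq> v3" "v1 \<noteq> v4"
    "v2 \<noteq> v3" "v2 \<noteq> v4" "v3 \<noteq> v4"
    using e n n' by auto
  have eq: "chromatic_number S E = clique_number S E"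
    using perf V unfolding perfect_graph_def S_def by blast
  have cl: "card K \<le> 2" if K: "K \<subseteq> S" "is_clique K E" for K
  proof -
    have ne: "\<not> (x \<in> K \<and> y \<in> K)" if "\<not> E x y" "x \<noteq> y" for x y
      using K(2) that unfolding is_clique_def by blast
    have a: "\<not> (v0 \<in> K \<and> v2 \<in> K)" "\<not> (v0 \<in> K \<and> v3 \<in> K)" "\<not> (v1 \<in> K \<and> v3 \<in> K)"
      "\<not> (v1 \<in> K \<and> v4 \<in> K)" "\<not> (v2 \<in> K \<and> v4 \<in> K)"
      using ne[OF n(1) d(2)] ne[OF n(2) d(3)] ne[OF n(3) d(6)] ne[OF n(4) d(7)] ne[OF n(5) d(9)] by auto
    have KS: "K \<subseteq> {v0, v1, v2, v3, v4}" using K(1) unfolding S_def .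
    show ?thesis
    proof (cases "v0 \<in> K")
      case True
      then show ?thesis
      proof (cases "v1 \<in> K")
        case True
        then have "K \<subseteq> {v0, v1}" using KS a \<open>v0 \<in> K\<close> by auto
        then show ?thesis by (rule sub2)
      next
        case False
        then have "K \<subseteq> {v0, v4}" using KS a \<open>v0 \<in> K\<close> by auto
        then show ?thesis by (rule sub2)
      qed
    next
      case False
      then show ?thesis
      proof (cases "v1 \<in> K")
        case True
        then have "K \<subseteq> {v1, v2}" using KS a \<open>v0 \<notin> K\<close> by auto
        then show ?thesis by (rule sub2)
      next
        case False
        show ?thesis
        proof (cases "v2 \<in> K")
          case True
          then have "K \<subseteq> {v2, v3}" using KS a \<open>v0 \<notin> K\<close> \<open>v1 \<notin> K\<close> by auto
          then show ?thesis by (rule sub2)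
        next
          case False
          then have "K \<subseteq> {v3, v4}" using KS a \<open>v0 \<notin> K\<close> \<open>v1 \<notin> K\<close> by auto
          then show ?thesis by (rule sub2)
        qed
      qed
    qed
  qed
  have fin: "finite {card K | K. K \<subseteq> S \<and> is_clique K E}"
  proof -
    have "{card K | K. K \<subseteq> S \<and> is_clique K E} \<subseteq> {..2}" using cl by auto
    then show ?thesis using finite_subset by blast
  qed
  have "clique_number S E \<le> 2"
  proof -
    have ne: "{card K | K. K \<subseteq> S \<and> is_clique K E} \<noteq> {}"
    proof -
      have "is_clique {} E" unfolding is_clique_def by blast
      then have "card ({}::'a set) \<in> {card K | K. K \<subseteq> S \<and> is_clique K E}" by blast
      then show ?thesis by blast
    qed
    show ?thesis unfolding clique_number_def using Max_le_iff[OF fin ne] cl by blast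
  qed
  moreover have "chromatic_number S E \<ge> 3"
  proof -
    define col :: "'a \<Rightarrow> nat" where
      "col = (\<lambda>x. if x = v0 then 0 else if x = v1 then 1 else if x = v2 then 0 else if x = v3 then 1 else 2)"
    have "proper_colouring S E col 3"
      unfolding proper_colouring_def S_def col_def using d n n' by auto
    then have ex: "\<exists>c. proper_colouring S E c 3" by blast
    have "\<exists>c. proper_colouring S E c (chromatic_number S E)"
      unfolding chromatic_number_def by (rule LeastI_ex) (rule exI, rule ex)
    then obtain c where c: "proper_colouring S E c (chromatic_number S E)" by blast
    show ?thesis
    proof (rule ccontr)
      assume "\<not> 3 \<le> chromatic_number S E"
      then have lt: "\<forall>x\<in>S. c x < 2" using c unfolding proper_colouring_def by auto
      have "\<forall>x\<in>S. \<forall>y\<in>S. x \<noteq> y \<longrightarrow> E x y \<longrightarrow> c x \<noteq> c y" using c unfolding proper_colouring_def by blast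
      then have "c v0 \<noteq> c v1" "c v1 \<noteq> c v2" "c v2 \<noteq> c v3" "c v3 \<noteq> c v4" "c v4 \<noteq> c v0"
        using e d unfolding S_def by auto
      moreover have "c v0 < 2" "c v1 < 2" "c v2 < 2" "c v3 < 2" "c v4 < 2" using lt unfolding S_def by auto
      ultimately show False by linarith
    qed
  qed
  ultimately show False using eq by linarith
qed



lemma (in group) one_of_coprime_pows_C:
  assumes "x \<in> carrier G" "x [^] (m::nat) = \<one>" "x [^] (n::nat) = \<one>" "coprime m n"
  shows "x = \<one>"
proof -
  have "ord x dvd m" "ord x dvd n" using assms pow_eq_id by auto
  then have "ord x dvd gcd m n" by simp
  then have "ord x = 1" using assms(4) by simp
  then show ?thesis using ord_eq_1 assms(1) by blast
qed

lemma (in group) exists_prime_order: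
  assumes fin: "finite (carrier G)" and p: "Factorial_Ring.prime p" and dv: "p dvd order G"
  shows "\<exists>x\<in>carrier G. ord x = p"
proof -
  obtain m where m: "order G = p ^ 1 * m" using dv by auto
  obtain H where H: "subgroup H G" "card H = p"
    using sylow_thm[OF p is_group m fin] by auto
  have "H \<noteq> {\<one>}"
  proof
    assume "H = {\<one>}"
    then have "p = 1" using H(2) by simp
    then show False using p by simp
  qed
  moreover have "\<one> \<in> H" using H(1) subgroup.one_closed by blast
  ultimately obtain h where h: "h \<in> H" "h \<noteq> \<one>" by blast
  have hc: "h \<in> carrier G" using h H(1) subgroup.subset by blast
  define K where "K = generate G {h}"
  have Ksub: "subgroup K G" unfolding K_def using generate_is_subgroup hc by blast
  have KH: "K \<subseteq> H" unfolding K_def using generate_subgroup_incl[OF _ H(1)] h by blast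
  have "subgroup K (G\<lparr>carrier := H\<rparr>)" by (rule subgroup_incl[OF Ksub H(1) KH])
  then have "card (rcosets\<^bsub>G\<lparr>carrier := H\<rparr>\<^esub> K) * card K = order (G\<lparr>carrier := H\<rparr>)"
    using group.lagrange[OF subgroup_imp_group[OF H(1)]] by blast
  moreover have "order (G\<lparr>carrier := H\<rparr>) = p" using H(2) by (simp add: order_def)
  ultimately have "card K dvd p" by (metis dvd_triv_right)
  moreover have "ord h = card K" unfolding K_def by (rule generate_pow_card[OF hc])
  moreover have "ord h \<noteq> 1" using ord_eq_1 hc h by blast
  ultimately have "ord h = p" using p unfolding prime_nat_iff by auto
  then show ?thesis using hc by blast
qed

lemma (in group) pow_in_generate:
  "x \<in> carrier G \<Longrightarrow> x [^] (n::nat) \<in> generate G {x}"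
proof -
  assume x: "x \<in> carrier G"
  have "x [^] n = x [^] (int n)" by (simp add: int_pow_int)
  then show ?thesis using generate_pow[OF x] by blast
qed

lemma (in group) in_generate_pow_one:
  assumes x: "x \<in> carrier G" and y: "y \<in> generate G {x}" and xm: "x [^] (m::nat) = \<one>"
  shows "y [^] m = \<one>"
proof -
  obtain k :: int where k: "y = x [^] k" using y generate_pow[OF x] by blast
  have "y [^] m = y [^] (int m)" by (simp add: int_pow_int)
  also have "\<dots> = x [^] (k * int m)" using k x by (simp add: int_pow_pow)
  also have "\<dots> = x [^] (int m * k)" by (simp add: mult.commute)
  also have "\<dots> = (x [^] (int m)) [^] k" using x by (simp add: int_pow_pow)
  also have "\<dots> = \<one>" using xm by (simp add: int_pow_int)
  finally show ?thesis .
qed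

lemma (in group) in_generate_of_coprime_pow:
  assumes x: "x \<in> carrier G" and xn: "x [^] (n::nat) = \<one>" and cop: "coprime m n"
  shows "x \<in> generate G {x [^] (m::nat)}"
proof -
  have "coprime (int m) (int n)" using cop by simp
  then obtain u v :: int where uv: "u * int m + v * int n = 1"
    by (metis bezout_int coprime_iff_gcd_eq_1)
  have "x = x [^] (1::int)" using x by simp
  also have "\<dots> = x [^] (int m * u) \<otimes> x [^] (int n * v)" using x uv
    by (simp add: int_pow_mult[symmetric] mult.commute)
  also have "\<dots> = (x [^] int m) [^] u \<otimes> (x [^] int n) [^] v" using x by (simp add: int_pow_pow)
  also have "\<dots> = (x [^] m) [^] u" using xn x by (simp add: int_pow_int)
  finally have "x = (x [^] m) [^] u" .
  then show ?thesis using generate_pow[of "x [^] m"] x by blast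
qed

lemma (in group) generate_mono_elem:
  assumes "x \<in> carrier G" "y \<in> generate G {x}"
  shows "generate G {y} \<subseteq> generate G {x}"
  using generate_subgroup_incl[of "{y}" "generate G {x}"] generate_is_subgroup[of "{x}"] assms by blast

lemma (in group) diff_edge_sym:
  "diff_graph_edge G x y \<Longrightarrow> diff_graph_edge G y x"
  unfolding diff_graph_edge_def int_power_graph_edge_def power_graph_edge_def by blast

lemma (in group) diff_edge_intro:
  assumes x: "x \<in> carrier G" and y: "y \<in> carrier G"
    and zx: "z \<in> generate G {x}" and zy: "z \<in> generate G {y}" and z1: "z \<noteq> \<one>"
    and xm: "x [^] (m::nat) = \<one>" and ym: "y [^] m \<noteq> \<one>"
    and yn: "y [^] (n::nat) = \<one>" and xn: "x [^] n \<noteq> \<one>"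
  shows "diff_graph_edge G x y"
proof -
  have xy: "x \<noteq> y" using xm ym by blast
  have "generate G {x} \<inter> generate G {y} \<noteq> {\<one>}" using zx zy z1 by blast
  then have ie: "int_power_graph_edge G x y" unfolding int_power_graph_edge_def using x y xy by blast
  have n1: "\<not> (\<exists>k::int. y = x [^] k)"
  proof
    assume "\<exists>k::int. y = x [^] k"
    then have "y \<in> generate G {x}" using generate_pow[OF x] by blast
    then show False using in_generate_pow_one[OF x _ xm] ym by blast
  qed
  have n2: "\<not> (\<exists>k::int. x = y [^] k)"
  proof
    assume "\<exists>k::int. x = y [^] k"
    then have "x \<in> generate G {y}" using generate_pow[OF y] by blast
    then show False using in_generate_pow_one[OF y _ yn] xn by blast
  qed
  show ?thesis unfolding diff_graph_edge_def power_graph_edge_def using ie n1 n2 by blast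
qed

lemma (in group) diff_nonedge_coprime:
  assumes x: "x \<in> carrier G" and y: "y \<in> carrier G"
    and xm: "x [^] (m::nat) = \<one>" and yn: "y [^] (n::nat) = \<one>" and cop: "coprime m n"
    and x1: "x \<noteq> \<one>" and y1: "y \<noteq> \<one>"
  shows "\<not> diff_graph_edge G x y"
proof -
  have "generate G {x} \<inter> generate G {y} \<subseteq> {\<one>}"
  proof
    fix z assume z: "z \<in> generate G {x} \<inter> generate G {y}"
    have zc: "z \<in> carrier G" using z generate_pow[OF x] x by auto
    have "z [^] m = \<one>" using in_generate_pow_one[OF x _ xm] z by blast
    moreover have "z [^] n = \<one>" using in_generate_pow_one[OF y _ yn] z by blast
    ultimately show "z \<in> {\<one>}" using one_of_coprime_pows_C[OF zc _ _ cop] by blast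
  qed
  moreover have "\<one> \<in> generate G {x} \<inter> generate G {y}"
    using generate.one by blast
  ultimately have "generate G {x} \<inter> generate G {y} = {\<one>}" by blast
  then show ?thesis unfolding diff_graph_edge_def int_power_graph_edge_def using x1 y1 by blast
qed

lemma (in group) diff_nonedge_power:
  assumes x: "x \<in> carrier G" and y: "y \<in> generate G {x}"
  shows "\<not> diff_graph_edge G x y" "\<not> diff_graph_edge G y x"
proof -
  obtain k :: int where k: "y = x [^] k" using y generate_pow[OF x] by blast
  have yc: "y \<in> carrier G" using k x by simp
  have "x \<noteq> y \<Longrightarrow> power_graph_edge G x y" unfolding power_graph_edge_def using x yc k by blast
  moreover have "x \<noteq> y \<Longrightarrow> power_graph_edge G y x" unfolding power_graph_edge_def using x yc k by blast
  ultimately show "\<not> diff_graph_edge G x y" "\<not> diff_graph_edge G y x"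
    unfolding diff_graph_edge_def int_power_graph_edge_def by blast+
qed



lemma (in group) pow_gen':
  "x \<in> carrier G \<Longrightarrow> z = x [^] (n::nat) \<Longrightarrow> z \<in> generate G {x}"
  using pow_in_generate by blast

lemma (in group) sub_power:
  assumes x: "x \<in> carrier G" and y: "y \<in> carrier G"
    and yn: "y [^] (n::nat) = \<one>" and cop: "coprime m n" and eq: "y [^] (m::nat) = x [^] m"
  shows "y \<in> generate G {x}"
proof -
  have "y \<in> generate G {y [^] m}" by (rule in_generate_of_coprime_pow[OF y yn cop])
  also have "\<dots> = generate G {x [^] m}" using eq by simp
  also have "\<dots> \<subseteq> generate G {x}" by (rule generate_mono_elem[OF x pow_in_generate[OF x]])
  finally show ?thesis .
qed

lemma (in group) five_cycle:
  assumes carr: "a \<in> carrier G" "b \<in> carrier G" "c \<in> carrier G" "d \<in> carrier G"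
    and ords: "ord a = p" "ord b = q" "ord c = r" "ord d = s"
    and pr: "Factorial_Ring.prime p" "Factorial_Ring.prime q" "Factorial_Ring.prime r" "Factorial_Ring.prime s"
    and dist: "p \<noteq> q" "p \<noteq> r" "p \<noteq> s" "q \<noteq> r" "q \<noteq> s" "r \<noteq> s"
    and com: "a \<otimes> b = b \<otimes> a" "a \<otimes> c = c \<otimes> a" "a \<otimes> d = d \<otimes> a"
      "b \<otimes> c = c \<otimes> b" "b \<otimes> d = d \<otimes> b" "c \<otimes> d = d \<otimes> c"
  shows "\<not> perfect_graph (diff_graph_vertices G) (diff_graph_edge G)"
proof -
  note [simp] = carr
  have pw_iff: "a [^] n = \<one> \<longleftrightarrow> p dvd n" "b [^] n = \<one> \<longleftrightarrow> q dvd n"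
    "c [^] n = \<one> \<longleftrightarrow> r dvd n" "d [^] n = \<one> \<longleftrightarrow> s dvd n" for n :: nat
    using pow_eq_id carr ords by auto
  have pw_one: "p dvd n \<Longrightarrow> a [^] n = \<one>" "q dvd n \<Longrightarrow> b [^] n = \<one>"
    "r dvd n \<Longrightarrow> c [^] n = \<one>" "s dvd n \<Longrightarrow> d [^] n = \<one>" for n :: nat
    using pw_iff by auto
  have dvd_simps: "p dvd x * y \<longleftrightarrow> p dvd x \<or> p dvd y" "q dvd x * y \<longleftrightarrow> q dvd x \<or> q dvd y"
    "r dvd x * y \<longleftrightarrow> r dvd x \<or> r dvd y" "s dvd x * y \<longleftrightarrow> s dvd x \<or> s dvd y" for x y :: nat
    using pr prime_dvd_mult_iff by blast+
  have ndvd: "\<not> p dvd q" "\<not> p dvd r" "\<not> p dvd s" "\<not> q dvd p" "\<not> q dvd r" "\<not> q dvd s"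
    "\<not> r dvd p" "\<not> r dvd q" "\<not> r dvd s" "\<not> s dvd p" "\<not> s dvd q" "\<not> s dvd r"
    using pr dist primes_dvd_imp_eq by metis+
  have cop: "coprime p q" "coprime p r" "coprime p s" "coprime q p" "coprime q r" "coprime q s"
    "coprime r p" "coprime r q" "coprime r s" "coprime s p" "coprime s q" "coprime s r"
    using pr dist primes_coprime by metis+
  define v1 where "v1 = a \<otimes> b"
  define v2 where "v2 = a \<otimes> c"
  define v3 where "v3 = c \<otimes> d"
  define v4 where "v4 = a \<otimes> b \<otimes> c"
  define v5 where "v5 = a \<otimes> c \<otimes> d"
  have vc: "v1 \<in> carrier G" "v2 \<in> carrier G" "v3 \<in> carrier G" "v4 \<in> carrier G" "v5 \<in> carrier G"
    unfolding v1_def v2_def v3_def v4_def v5_def by simp_all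
  have com4': "a \<otimes> b \<otimes> c = c \<otimes> (a \<otimes> b)" using com carr by (metis m_assoc)
  have com5: "a \<otimes> c \<otimes> d = d \<otimes> (a \<otimes> c)" using com carr by (metis m_assoc)
  have pv: "v1 [^] n = a [^] n \<otimes> b [^] n" "v2 [^] n = a [^] n \<otimes> c [^] n"
    "v3 [^] n = c [^] n \<otimes> d [^] n" "v4 [^] n = a [^] n \<otimes> b [^] n \<otimes> c [^] n"
    "v5 [^] n = a [^] n \<otimes> c [^] n \<otimes> d [^] n" for n :: nat
    unfolding v1_def v2_def v3_def v4_def v5_def
      pow_mult_distrib[OF com4' m_closed[OF carr(1) carr(2)] carr(3)]
      pow_mult_distrib[OF com5 m_closed[OF carr(1) carr(3)] carr(4)]
      pow_mult_distrib[OF com(1) carr(1) carr(2)]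
      pow_mult_distrib[OF com(2) carr(1) carr(3)]
      pow_mult_distrib[OF com(6) carr(3) carr(4)] by (rule refl)+
  note S = pv pw_one pw_iff dvd_simps ndvd
  have e12: "diff_graph_edge G v1 v2"
  proof (rule diff_edge_intro[OF vc(1) vc(2), of "a [^] (q * r)" "p * q" "p * r"])
    show "a [^] (q * r) \<in> generate G {v1}" by (rule pow_gen'[OF vc(1), of _ "q * r"]) (simp add: S)
    show "a [^] (q * r) \<in> generate G {v2}" by (rule pow_gen'[OF vc(2), of _ "q * r"]) (simp add: S)
  qed (simp_all add: S)
  have e23: "diff_graph_edge G v2 v3"
  proof (rule diff_edge_intro[OF vc(2) vc(3), of "c [^] (p * s)" "p * r" "r * s"])
    show "c [^] (p * s) \<in> generate G {v2}" by (rule pow_gen'[OF vc(2), of _ "p * s"]) (simp add: S)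
    show "c [^] (p * s) \<in> generate G {v3}" by (rule pow_gen'[OF vc(3), of _ "p * s"]) (simp add: S)
  qed (simp_all add: S)
  have e34: "diff_graph_edge G v3 v4"
  proof (rule diff_edge_intro[OF vc(3) vc(4), of "c [^] (p * q * s)" "q * r * s" "p * q * r"])
    show "c [^] (p * q * s) \<in> generate G {v3}" by (rule pow_gen'[OF vc(3), of _ "p * q * s"]) (simp add: S)
    show "c [^] (p * q * s) \<in> generate G {v4}" by (rule pow_gen'[OF vc(4), of _ "p * q * s"]) (simp add: S)
  qed (simp_all add: S)
  have e45: "diff_graph_edge G v4 v5"
  proof (rule diff_edge_intro[OF vc(4) vc(5), of "a [^] (q * r * s)" "p * q * r" "p * r * s"])
    show "a [^] (q * r * s) \<in> generate G {v4}" by (rule pow_gen'[OF vc(4), of _ "q * r * s"]) (simp add: S)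
    show "a [^] (q * r * s) \<in> generate G {v5}" by (rule pow_gen'[OF vc(5), of _ "q * r * s"]) (simp add: S)
  qed (simp_all add: S)
  have e51: "diff_graph_edge G v5 v1"
  proof (rule diff_edge_intro[OF vc(5) vc(1), of "a [^] (q * r * s)" "p * r * s" "p * q * r"])
    show "a [^] (q * r * s) \<in> generate G {v5}" by (rule pow_gen'[OF vc(5), of _ "q * r * s"]) (simp add: S)
    show "a [^] (q * r * s) \<in> generate G {v1}" by (rule pow_gen'[OF vc(1), of _ "q * r * s"]) (simp add: S)
  qed (simp_all add: S)
  have v1ne: "v1 \<noteq> \<one>"
  proof
    assume "v1 = \<one>"
    then have "v1 [^] q = \<one>" by simp
    then show False by (simp add: S)
  qed
  have v3ne: "v3 \<noteq> \<one>"
  proof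
    assume "v3 = \<one>"
    then have "v3 [^] r = \<one>" by simp
    then show False by (simp add: S)
  qed
  have n13: "\<not> diff_graph_edge G v1 v3"
    by (rule diff_nonedge_coprime[OF vc(1) vc(3), of "p * q" "r * s"]) (simp_all add: S cop v1ne v3ne)
  have "v1 \<in> generate G {v4}"
    by (rule sub_power[OF vc(4) vc(1), of "p * q" r]) (simp_all add: S cop)
  then have n14: "\<not> diff_graph_edge G v1 v4" by (rule diff_nonedge_power(2)[OF vc(4)])
  have "v2 \<in> generate G {v4}"
    by (rule sub_power[OF vc(4) vc(2), of "p * r" q]) (simp_all add: S cop)
  then have n24: "\<not> diff_graph_edge G v2 v4" by (rule diff_nonedge_power(2)[OF vc(4)])
  have "v2 \<in> generate G {v5}"
    by (rule sub_power[OF vc(5) vc(2), of "p * r" s]) (simp_all add: S cop)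
  then have n25: "\<not> diff_graph_edge G v2 v5" by (rule diff_nonedge_power(2)[OF vc(5)])
  have "v3 \<in> generate G {v5}"
    by (rule sub_power[OF vc(5) vc(3), of "r * s" p]) (simp_all add: S cop)
  then have n35: "\<not> diff_graph_edge G v3 v5" by (rule diff_nonedge_power(2)[OF vc(5)])
  have V: "{v1, v2, v3, v4, v5} \<subseteq> diff_graph_vertices G"
    unfolding diff_graph_vertices_def using vc e12 e23 e34 e45 e51 by blast
  show ?thesis
    by (rule odd_hole_not_perfect[OF diff_edge_sym e12 e23 e34 e45 e51 n13 n14 n24 n25 n35 V])
qed

theorem proposition7p2:
  fixes G :: "('a, 'b) monoid_scheme"
  assumes "group G"
    and "finite (carrier G)"
    and "nilpotent_group G"
    and "card {p::nat. Factorial_Ring.prime p \<and> p dvd order G} \<ge> 4"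
  shows "\<not> perfect_graph (diff_graph_vertices G) (diff_graph_edge G)"
proof -
  interpret group G by fact
  define P where "P = {p::nat. Factorial_Ring.prime p \<and> p dvd order G}"
  have "Suc 3 \<le> card P" using assms(4) unfolding P_def by simp
  then obtain p B1 where B1: "P = insert p B1" "p \<notin> B1" "3 \<le> card B1"
    using card_le_Suc_iff[THEN iffD1] by blast
  then have "Suc 2 \<le> card B1" by simp
  then obtain q B2 where B2: "B1 = insert q B2" "q \<notin> B2" "2 \<le> card B2"
    using card_le_Suc_iff[THEN iffD1] by blast
  then have "Suc 1 \<le> card B2" by simp
  then obtain r B3 where B3: "B2 = insert r B3" "r \<notin> B3" "1 \<le> card B3"
    using card_le_Suc_iff[THEN iffD1] by blast
  then have "Suc 0 \<le> card B3" by simp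
  then obtain s B4 where B4: "B3 = insert s B4"
    using card_le_Suc_iff[THEN iffD1] by blast
  have inP: "p \<in> P" "q \<in> P" "r \<in> P" "s \<in> P" using B1 B2 B3 B4 by auto
  have dist: "p \<noteq> q" "p \<noteq> r" "p \<noteq> s" "q \<noteq> r" "q \<noteq> s" "r \<noteq> s"
    using B1 B2 B3 B4 by auto
  have pr: "Factorial_Ring.prime p" "Factorial_Ring.prime q" "Factorial_Ring.prime r" "Factorial_Ring.prime s"
    using inP unfolding P_def by auto
  have dv: "p dvd order G" "q dvd order G" "r dvd order G" "s dvd order G"
    using inP unfolding P_def by auto
  obtain a where a: "a \<in> carrier G" "ord a = p" using exists_prime_order[OF assms(2) pr(1) dv(1)] by blast
  obtain b where b: "b \<in> carrier G" "ord b = q" using exists_prime_order[OF assms(2) pr(2) dv(2)] by blast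
  obtain c where c: "c \<in> carrier G" "ord c = r" using exists_prime_order[OF assms(2) pr(3) dv(3)] by blast
  obtain d where d: "d \<in> carrier G" "ord d = s" using exists_prime_order[OF assms(2) pr(4) dv(4)] by blast
  have pw: "a [^]\<^bsub>G\<^esub> p = \<one>\<^bsub>G\<^esub>" "b [^]\<^bsub>G\<^esub> q = \<one>\<^bsub>G\<^esub>" "c [^]\<^bsub>G\<^esub> r = \<one>\<^bsub>G\<^esub>" "d [^]\<^bsub>G\<^esub> s = \<one>\<^bsub>G\<^esub>"
    using a b c d pow_ord_eq_1 by metis+
  have cop: "coprime p q" "coprime p r" "coprime p s" "coprime q r" "coprime q s" "coprime r s"
    using pr dist primes_coprime by metis+
  show ?thesis
  proof (rule five_cycle[OF a(1) b(1) c(1) d(1) a(2) b(2) c(2) d(2) pr dist])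
    show "a \<otimes>\<^bsub>G\<^esub> b = b \<otimes>\<^bsub>G\<^esub> a" by (rule nilpotent_commute[OF assms(3) a(1) b(1) pw(1) pw(2) cop(1)])
    show "a \<otimes>\<^bsub>G\<^esub> c = c \<otimes>\<^bsub>G\<^esub> a" by (rule nilpotent_commute[OF assms(3) a(1) c(1) pw(1) pw(3) cop(2)])
    show "a \<otimes>\<^bsub>G\<^esub> d = d \<otimes>\<^bsub>G\<^esub> a" by (rule nilpotent_commute[OF assms(3) a(1) d(1) pw(1) pw(4) cop(3)])
    show "b \<otimes>\<^bsub>G\<^esub> c = c \<otimes>\<^bsub>G\<^esub> b" by (rule nilpotent_commute[OF assms(3) b(1) c(1) pw(2) pw(3) cop(4)])
    show "b \<otimes>\<^bsub>G\<^esub> d = d \<otimes>\<^bsub>G\<^esub> b" by (rule nilpotent_commute[OF assms(3) b(1) d(1) pw(2) pw(4) cop(5)])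
    show "c \<otimes>\<^bsub>G\<^esub> d = d \<otimes>\<^bsub>G\<^esub> c" by (rule nilpotent_commute[OF assms(3) c(1) d(1) pw(3) pw(4) cop(6)])
  qed
qed

end
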